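(* Let $1\le k\le d$, let $\gamma(t)=(t,t^2,\dots,t^d)$ be the moment curve in $\mathbb{R}^d$, and let $U_1,U_2$ be two $k$-element sets of points on $\gamma$. Write $W=U_1\cup U_2=\{w_1,\dots,w_m\}$ with $w_i=\gamma(t_i)$ and $t_1<\dots<t_m$. Call a subset $\{w_{i_1},\dots,w_{i_q}\}\subseteq W$ with $i_1<\dots<i_q$ contiguous if $i_q-i_1=q-1$. Suppose that for some $j\in\{1,2\}$ one can write $U_j=Y_S\cup X_1\cup\dots\cup X_t\cup Y_E$ ($t\ge0$) with all of $Y_S,X_1,\dots,X_t,Y_E$ contiguous, $Y_S=\emptyset$ or $w_1\in Y_S$, $Y_E=\emptyset$ or $w_m\in Y_E$, and at most $d-k$ of the sets $X_i$ of odd cardinality. Then $\operatorname{conv}U_1\cap\operatorname{conv}U_2=\operatorname{conv}(U_1\cap U_2)$. *)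

theory Defs
  imports "HOL-Analysis.Analysis"
begin

text \<open>Coordinates of \<open>real ^ 'n\<close> are indexed by a finite well-ordered type; the
  position of index \<open>i\<close> (0-based) is the number of indices below it. So with
  d = CARD('n) the coordinates are i_1 < ... < i_d and the moment curve is
  gamma(t) = (t, t^2, ..., t^d).\<close>

definition coord_pos :: "'n::{finite,wellorder} \<Rightarrow> nat" where
  "coord_pos i = card {j. j < i}"

definition moment_curve :: "real \<Rightarrow> real ^ 'n::{finite,wellorder}" where
  "moment_curve t = (\<chi> i. t ^ Suc (coord_pos i))"

text \<open>Points of W are given by their (distinct) parameters; W = {w_1,...,w_m} with
  t_1 < ... < t_m. The index of a parameter s in W is 1 + the number of elements of W below s.\<close>

definition idx_in :: "real set \<Rightarrow> real \<Rightarrow> nat" where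
  "idx_in W s = Suc (card {v \<in> W. v < s})"

definition contiguous_in :: "real set \<Rightarrow> real set \<Rightarrow> bool" where
  "contiguous_in W S \<longleftrightarrow> S \<subseteq> W \<and>
     (S \<noteq> {} \<longrightarrow> idx_in W (Max S) - idx_in W (Min S) = card S - 1)"

end

theory Submission imports Defs "HOL-Computational_Algebra.Polynomial"
begin

definition sg :: "bool \<Rightarrow> real \<Rightarrow> bool" where
  "sg s v \<longleftrightarrow> (if s then 0 < v else v < 0)"

lemma sg_mult_pos: "sg s v \<Longrightarrow> 0 < c \<Longrightarrow> sg s (v * c)"
  by (auto simp: sg_def mult_pos_pos mult_neg_pos)

lemma sg_mult_neg: "sg s v \<Longrightarrow> c < 0 \<Longrightarrow> sg (\<not> s) (v * c)"
  by (auto simp: sg_def mult_pos_neg mult_neg_neg)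

lemma sg_nz: "sg s v \<Longrightarrow> v \<noteq> 0"
  by (auto simp: sg_def split: if_splits)

lemma sign_poly_exists:
  fixes A :: "real set" and \<sigma> :: "real \<Rightarrow> bool"
  assumes "finite A"
  shows "A \<noteq> {} \<longrightarrow> (\<exists>p. degree p \<le> card A - 1 \<and> (even (degree p) \<longleftrightarrow> \<sigma> (Min A) = \<sigma> (Max A))
     \<and> (\<forall>x\<in>A. sg (\<sigma> x) (poly p x))
     \<and> (\<forall>y. y \<le> Min A \<longrightarrow> sg (\<sigma> (Min A)) (poly p y))
     \<and> (\<forall>y. Max A \<le> y \<longrightarrow> sg (\<sigma> (Max A)) (poly p y)))"
  using assms
proof (induction A rule: finite_linorder_max_induct)
  case empty thus ?case by simp
next
  case (insert b A)
  show ?case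
  proof (cases "A = {}")
    case True
    show ?thesis
      by (rule impI, rule exI[of _ "[: if \<sigma> b then 1 else -1 :]"]) (simp add: True sg_def)
  next
    case False
    from insert.IH False obtain p where
      dp: "degree p \<le> card A - 1" and par: "(even (degree p) \<longleftrightarrow> \<sigma> (Min A) = \<sigma> (Max A))"
      and sA: "\<forall>x\<in>A. sg (\<sigma> x) (poly p x)"
      and sL: "\<forall>y. y \<le> Min A \<longrightarrow> sg (\<sigma> (Min A)) (poly p y)"
      and sR: "\<forall>y. Max A \<le> y \<longrightarrow> sg (\<sigma> (Max A)) (poly p y)" by blast
    have MaxA: "Max A \<in> A" "Min A \<in> A" using False insert.hyps(1) by auto
    have bgt: "Max A < b" using insert.hyps(2) MaxA by auto
    have minmax: "Min A \<le> Max A" using MaxA insert.hyps(1) by simp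
    have Mi: "Min (insert b A) = Min A"
    proof (rule Min_eqI)
      show "finite (insert b A)" using insert.hyps by simp
      show "Min A \<in> insert b A" using MaxA by simp
      fix y assume "y \<in> insert b A"
      thus "Min A \<le> y" using minmax bgt insert.hyps(1) by auto
    qed
    have Ma: "Max (insert b A) = b"
      using insert.hyps by (intro Max_eqI) auto
    have cA: "card (insert b A) = card A + 1" using insert.hyps by auto
    have cA1: "card A \<ge> 1" using False insert.hyps(1) by (simp add: Suc_leI card_gt_0_iff)
    show ?thesis
    proof (cases "\<sigma> b = \<sigma> (Max A)")
      case True
      show ?thesis
        apply (rule impI, rule exI[of _ p])
        using dp par sA sL sR True bgt cA
        by (auto simp: Mi Ma)
    next
      case F: False
      define m where "m = (Max A + b) / 2"
      have m: "Max A < m" "m < b" using bgt by (auto simp: m_def)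
      define q where "q = p * [: m, -1 :]"
      have pq: "poly q y = poly p y * (m - y)" for y by (simp add: q_def algebra_simps)
      have pnz: "p \<noteq> 0" using sA MaxA sg_nz by fastforce
      have dq: "degree q = degree p + 1" unfolding q_def
        using pnz by (subst degree_mult_eq) auto
      have sb: "\<sigma> b = (\<not> \<sigma> (Max A))" using F by auto
      show ?thesis
      proof (rule impI, rule exI[of _ q], intro conjI allI impI ballI)
        show "degree q \<le> card (insert b A) - 1" using dq dp cA cA1 by simp
        show "even (degree q) = (\<sigma> (Min (insert b A)) = \<sigma> (Max (insert b A)))"
          using dq par sb by (auto simp: Mi Ma)
      next
        fix x assume "x \<in> insert b A"
        then show "sg (\<sigma> x) (poly q x)"
        proof
          assume "x = b"
          thus ?thesis using sR bgt m sg_mult_neg[of "\<sigma> (Max A)" "poly p b" "m - b"] sb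
            by (simp add: pq)
        next
          assume xA: "x \<in> A"
          hence "x \<le> Max A" using insert.hyps(1) by simp
          thus ?thesis using sA xA m sg_mult_pos[of "\<sigma> x" "poly p x" "m - x"] by (simp add: pq)
        qed
      next
        fix y assume "y \<le> Min (insert b A)"
        hence "y \<le> Min A" by (simp add: Mi)
        thus "sg (\<sigma> (Min (insert b A))) (poly q y)"
          using sL minmax m sg_mult_pos[of "\<sigma> (Min A)" "poly p y" "m - y"] by (simp add: pq Mi)
      next
        fix y assume "Max (insert b A) \<le> y"
        hence "b \<le> y" by (simp add: Ma)
        thus "sg (\<sigma> (Max (insert b A))) (poly q y)"
          using sR bgt m sg_mult_neg[of "\<sigma> (Max A)" "poly p y" "m - y"] sb by (simp add: pq Ma)
      qed
    qed
  qed
qed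

definition good :: "real set \<Rightarrow> (real \<Rightarrow> bool) \<Rightarrow> real set \<Rightarrow> real poly \<Rightarrow> bool" where
  "good W \<tau> B q \<longleftrightarrow> (\<forall>w\<in>W. w \<notin> B \<longrightarrow> 0 < poly q w) \<and> (\<forall>w\<in>B. sg (\<tau> w) (poly q w))"

lemma good_empty: "good W \<tau> {} 1"
  by (simp add: good_def)

lemma good_mult:
  assumes "A1 \<subseteq> W" "A2 \<subseteq> W" "A1 \<inter> A2 = {}" "good W \<tau> A1 q1" "good W \<tau> A2 q2"
  shows "good W \<tau> (A1 \<union> A2) (q1 * q2)"
proof -
  have g1: "\<forall>w\<in>W. w \<notin> A1 \<longrightarrow> 0 < poly q1 w" "\<forall>w\<in>A1. sg (\<tau> w) (poly q1 w)"
    using assms(4) by (auto simp: good_def)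
  have g2: "\<forall>w\<in>W. w \<notin> A2 \<longrightarrow> 0 < poly q2 w" "\<forall>w\<in>A2. sg (\<tau> w) (poly q2 w)"
    using assms(5) by (auto simp: good_def)
  show ?thesis unfolding good_def
  proof (intro conjI ballI impI)
    fix w assume "w \<in> W" "w \<notin> A1 \<union> A2"
    thus "0 < poly (q1 * q2) w" using g1 g2 by (simp add: poly_mult)
  next
    fix w assume w: "w \<in> A1 \<union> A2"
    show "sg (\<tau> w) (poly (q1 * q2) w)"
    proof (cases "w \<in> A1")
      case True
      hence "w \<notin> A2" "w \<in> W" using assms(1,3) by auto
      hence "0 < poly q2 w" using g2 by blast
      thus ?thesis using sg_mult_pos[of "\<tau> w" "poly q1 w" "poly q2 w"] g1 True by (simp add: poly_mult)
    next
      case False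
      hence A2: "w \<in> A2" "w \<in> W" using w assms(2) by auto
      hence "0 < poly q1 w" using g1 False by blast
      thus ?thesis using sg_mult_pos[of "\<tau> w" "poly q2 w" "poly q1 w"] g2 A2 by (simp add: poly_mult mult.commute)
    qed
  qed
qed

lemma contig_between:
  assumes c: "contiguous_in W B" and fW: "finite W" and ne: "B \<noteq> {}"
    and w: "w \<in> W" "Min B \<le> w" "w \<le> Max B"
  shows "w \<in> B"
proof -
  have BW: "B \<subseteq> W" using c by (simp add: contiguous_in_def)
  have fB: "finite B" by (rule finite_subset[OF BW fW])
  have d: "idx_in W (Max B) - idx_in W (Min B) = card B - 1" using c ne by (simp add: contiguous_in_def)
  let ?L = "{v \<in> W. v < Min B}" and ?R = "{v \<in> W. v < Max B}"
  have mm: "Min B \<le> Max B" using fB ne by simp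
  have sub: "?L \<subseteq> ?R" using mm by auto
  have finL: "finite ?L" using fW by simp
  have "card ?R - card ?L = card (?R - ?L)"
    using card_Diff_subset[OF finL sub] by simp
  moreover have "?R - ?L = {v \<in> W. Min B \<le> v \<and> v < Max B}" by auto
  ultimately have cC: "card {v \<in> W. Min B \<le> v \<and> v < Max B} = card (B - {Max B})"
    using d fB ne by (simp add: idx_in_def)
  have BC: "B - {Max B} \<subseteq> {v \<in> W. Min B \<le> v \<and> v < Max B}"
  proof
    fix x assume x: "x \<in> B - {Max B}"
    have "x \<le> Max B" "Min B \<le> x" using x fB by auto
    thus "x \<in> {v \<in> W. Min B \<le> v \<and> v < Max B}" using x BW by auto
  qed
  have finC: "finite {v \<in> W. Min B \<le> v \<and> v < Max B}" using fW by simp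
  have eq: "B - {Max B} = {v \<in> W. Min B \<le> v \<and> v < Max B}"
    by (rule card_subset_eq[OF finC BC cC[symmetric]])
  show ?thesis
  proof (cases "w = Max B")
    case True thus ?thesis using Max_in[OF fB ne] by simp
  next
    case False
    hence "w \<in> {v \<in> W. Min B \<le> v \<and> v < Max B}" using w by simp
    hence "w \<in> B - {Max B}" by (simp only: eq)
    thus ?thesis by simp
  qed
qed

lemma block_mid:
  assumes fW: "finite W" and c: "contiguous_in W B"
  shows "\<exists>q. good W \<tau> B q \<and> degree q \<le> card B + (if odd (card B) then 1 else 0)"
proof (cases "B = {}")
  case True thus ?thesis using good_empty by (intro exI[of _ 1]) auto
next
  case ne: False
  have BW: "B \<subseteq> W" using c by (simp add: contiguous_in_def)
  have fB: "finite B" using BW fW finite_subset by blast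
  define L where "L = {w \<in> W. w < Min B}"
  define R where "R = {w \<in> W. Max B < w}"
  define a where "a = (if L = {} then Min B - 1 else Max L)"
  define b where "b = (if R = {} then Max B + 1 else Min R)"
  have fL: "finite L" "finite R" using fW by (auto simp: L_def R_def)
  have a: "a < Min B" "\<And>w. w \<in> W \<Longrightarrow> w < Min B \<Longrightarrow> w \<le> a"
    unfolding a_def using fL by (auto simp: L_def)
  have b: "Max B < b" "\<And>w. w \<in> W \<Longrightarrow> Max B < w \<Longrightarrow> b \<le> w"
    unfolding b_def using fL by (auto simp: R_def)
  have mm: "Min B \<le> Max B" using fB ne by simp
  have bnd: "\<And>y. y \<in> B \<Longrightarrow> Min B \<le> y \<and> y \<le> Max B" using fB by simp
  have aB: "a \<notin> B" using a fB by (meson Min_le not_le)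
  have bB: "b \<notin> B" using b fB by (meson Max_ge not_le)
  define A where "A = insert a (insert b B)"
  define \<sigma> where "\<sigma> = (\<lambda>x. if x \<in> B then \<tau> x else True)"
  have fA: "finite A" using fB by (simp add: A_def)
  have cA: "card A = card B + 2" using aB bB a b mm fB by (simp add: A_def)
  have MinA: "Min A = a"
    by (rule Min_eqI) (use fA a b mm fB in \<open>auto simp: A_def dest!: bnd\<close>)
  have MaxA: "Max A = b"
    by (rule Max_eqI) (use fA a b mm fB in \<open>auto simp: A_def dest!: bnd\<close>)
  obtain p where dp: "degree p \<le> card A - 1" and par: "(even (degree p) \<longleftrightarrow> \<sigma> (Min A) = \<sigma> (Max A))"
      and sA: "\<forall>x\<in>A. sg (\<sigma> x) (poly p x)"
      and sL: "\<forall>y. y \<le> Min A \<longrightarrow> sg (\<sigma> (Min A)) (poly p y)"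
      and sR: "\<forall>y. Max A \<le> y \<longrightarrow> sg (\<sigma> (Max A)) (poly p y)"
    using sign_poly_exists[OF fA, of \<sigma>] by (auto simp: A_def)
  have ev: "even (degree p)" using par aB bB by (simp add: MinA MaxA \<sigma>_def)
  have "good W \<tau> B p"
    unfolding good_def
  proof (intro conjI ballI impI)
    fix w assume w: "w \<in> W" "w \<notin> B"
    have "w < Min B \<or> Max B < w" using contig_between[OF c fW ne w(1)] w(2) by force
    thus "0 < poly p w"
    proof
      assume "w < Min B"
      hence "w \<le> Min A" using a w by (simp add: MinA)
      thus ?thesis using sL aB by (simp add: MinA \<sigma>_def sg_def)
    next
      assume "Max B < w"
      hence "Max A \<le> w" using b w by (simp add: MaxA)
      thus ?thesis using sR bB by (simp add: MaxA \<sigma>_def sg_def)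
    qed
  next
    fix w assume "w \<in> B" thus "sg (\<tau> w) (poly p w)" using sA by (auto simp: A_def \<sigma>_def)
  qed
  moreover have "degree p \<le> card B + (if odd (card B) then 1 else 0)"
  proof (cases "odd (card B)")
    case True thus ?thesis using dp cA by simp
  next
    case False
    hence "odd (card B + 1)" by simp
    hence "degree p \<noteq> card B + 1" using ev by metis
    thus ?thesis using dp cA False by simp
  qed
  ultimately show ?thesis by blast
qed

lemma block_start:
  assumes fW: "finite W" and c: "contiguous_in W B" and h: "B = {} \<or> Min W \<in> B"
  shows "\<exists>q. good W \<tau> B q \<and> degree q \<le> card B"
proof (cases "B = {}")
  case True thus ?thesis using good_empty by (intro exI[of _ 1]) auto
next
  case ne: False
  have BW: "B \<subseteq> W" using c by (simp add: contiguous_in_def)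
  have fB: "finite B" using BW fW finite_subset by blast
  have mW: "Min W \<in> B" using h ne by simp
  have Wne: "W \<noteq> {}" using ne BW by auto
  have MB: "Min B = Min W"
    by (rule Min_eqI) (use fB mW BW fW in auto)
  define R where "R = {w \<in> W. Max B < w}"
  define b where "b = (if R = {} then Max B + 1 else Min R)"
  have fL: "finite R" using fW by (auto simp: R_def)
  have b: "Max B < b" "\<And>w. w \<in> W \<Longrightarrow> Max B < w \<Longrightarrow> b \<le> w"
    unfolding b_def using fL by (auto simp: R_def)
  have mm: "Min B \<le> Max B" using fB ne by simp
  have bnd: "\<And>y. y \<in> B \<Longrightarrow> Min B \<le> y \<and> y \<le> Max B" using fB by simp
  have bB: "b \<notin> B" using b fB by (meson Max_ge not_le)
  define A where "A = insert b B"
  define \<sigma> where "\<sigma> = (\<lambda>x. if x \<in> B then \<tau> x else True)"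
  have fA: "finite A" using fB by (simp add: A_def)
  have cA: "card A = card B + 1" using bB fB by (simp add: A_def)
  have MaxA: "Max A = b"
    by (rule Max_eqI) (use fA b mm fB in \<open>auto simp: A_def dest!: bnd\<close>)
  obtain p where dp: "degree p \<le> card A - 1"
      and sA: "\<forall>x\<in>A. sg (\<sigma> x) (poly p x)"
      and sR: "\<forall>y. Max A \<le> y \<longrightarrow> sg (\<sigma> (Max A)) (poly p y)"
    using sign_poly_exists[OF fA, of \<sigma>] by (auto simp: A_def)
  have "good W \<tau> B p"
    unfolding good_def
  proof (intro conjI ballI impI)
    fix w assume w: "w \<in> W" "w \<notin> B"
    have "Min B \<le> w" using MB w fW by simp
    hence "Max B < w" using contig_between[OF c fW ne w(1)] w(2) by force
    hence "Max A \<le> w" using b w by (simp add: MaxA)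
    thus "0 < poly p w" using sR bB by (simp add: MaxA \<sigma>_def sg_def)
  next
    fix w assume "w \<in> B" thus "sg (\<tau> w) (poly p w)" using sA by (auto simp: A_def \<sigma>_def)
  qed
  moreover have "degree p \<le> card B" using dp cA by simp
  ultimately show ?thesis by blast
qed

lemma block_end:
  assumes fW: "finite W" and c: "contiguous_in W B" and h: "B = {} \<or> Max W \<in> B"
  shows "\<exists>q. good W \<tau> B q \<and> degree q \<le> card B"
proof (cases "B = {}")
  case True thus ?thesis using good_empty by (intro exI[of _ 1]) auto
next
  case ne: False
  have BW: "B \<subseteq> W" using c by (simp add: contiguous_in_def)
  have fB: "finite B" using BW fW finite_subset by blast
  have mW: "Max W \<in> B" using h ne by simp
  have Wne: "W \<noteq> {}" using ne BW by auto
  have MB: "Max B = Max W"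
    by (rule Max_eqI) (use fB mW BW fW in auto)
  define L where "L = {w \<in> W. w < Min B}"
  define a where "a = (if L = {} then Min B - 1 else Max L)"
  have fL: "finite L" using fW by (auto simp: L_def)
  have a: "a < Min B" "\<And>w. w \<in> W \<Longrightarrow> w < Min B \<Longrightarrow> w \<le> a"
    unfolding a_def using fL by (auto simp: L_def)
  have mm: "Min B \<le> Max B" using fB ne by simp
  have bnd: "\<And>y. y \<in> B \<Longrightarrow> Min B \<le> y \<and> y \<le> Max B" using fB by simp
  have aB: "a \<notin> B" using a fB by (meson Min_le not_le)
  define A where "A = insert a B"
  define \<sigma> where "\<sigma> = (\<lambda>x. if x \<in> B then \<tau> x else True)"
  have fA: "finite A" using fB by (simp add: A_def)
  have cA: "card A = card B + 1" using aB fB by (simp add: A_def)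
  have MinA: "Min A = a"
    by (rule Min_eqI) (use fA a mm fB in \<open>auto simp: A_def dest!: bnd\<close>)
  obtain p where dp: "degree p \<le> card A - 1"
      and sA: "\<forall>x\<in>A. sg (\<sigma> x) (poly p x)"
      and sL: "\<forall>y. y \<le> Min A \<longrightarrow> sg (\<sigma> (Min A)) (poly p y)"
    using sign_poly_exists[OF fA, of \<sigma>] by (auto simp: A_def)
  have "good W \<tau> B p"
    unfolding good_def
  proof (intro conjI ballI impI)
    fix w assume w: "w \<in> W" "w \<notin> B"
    have "w \<le> Max B" using MB w fW by simp
    hence "w < Min B" using contig_between[OF c fW ne w(1)] w(2) by force
    hence "w \<le> Min A" using a w by (simp add: MinA)
    thus "0 < poly p w" using sL aB by (simp add: MinA \<sigma>_def sg_def)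
  next
    fix w assume "w \<in> B" thus "sg (\<tau> w) (poly p w)" using sA by (auto simp: A_def \<sigma>_def)
  qed
  moreover have "degree p \<le> card B" using dp cA by simp
  ultimately show ?thesis by blast
qed

definition disj :: "real set list \<Rightarrow> bool" where
  "disj Xs \<longleftrightarrow> (\<forall>a<length Xs. \<forall>b<length Xs. a \<noteq> b \<longrightarrow> Xs ! a \<inter> Xs ! b = {})"

lemma disj_Cons: "disj (X # Xs) \<Longrightarrow> disj Xs \<and> X \<inter> \<Union>(set Xs) = {}"
proof -
  assume d: "disj (X # Xs)"
  have "disj Xs" unfolding disj_def
  proof (intro allI impI)
    fix a b assume "a < length Xs" "b < length Xs" "a \<noteq> b"
    thus "Xs ! a \<inter> Xs ! b = {}" using d[unfolded disj_def, rule_format, of "Suc a" "Suc b"] by simp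
  qed
  moreover have "X \<inter> \<Union>(set Xs) = {}"
  proof (rule ccontr)
    assume "X \<inter> \<Union>(set Xs) \<noteq> {}"
    then obtain i where "i < length Xs" "X \<inter> Xs ! i \<noteq> {}" by (metis Int_Union in_set_conv_nth SUP_bot_conv(2))
    thus False using d[unfolded disj_def, rule_format, of 0 "Suc i"] by simp
  qed
  ultimately show ?thesis by blast
qed

lemma blocks_good:
  assumes fW: "finite W"
  shows "(\<forall>X\<in>set Xs. contiguous_in W X) \<Longrightarrow> disj Xs \<Longrightarrow>
    \<exists>q. good W \<tau> (\<Union>(set Xs)) q \<and>
        degree q \<le> sum_list (map (\<lambda>X. card X + (if odd (card X) then 1 else 0)) Xs)"
proof (induction Xs)
  case Nil thus ?case using good_empty by (intro exI[of _ 1]) auto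
next
  case (Cons X Xs)
  from disj_Cons[OF Cons.prems(2)] have d: "disj Xs" "X \<inter> \<Union>(set Xs) = {}" by auto
  from Cons.IH Cons.prems(1) d obtain q where q: "good W \<tau> (\<Union>(set Xs)) q"
    "degree q \<le> sum_list (map (\<lambda>X. card X + (if odd (card X) then 1 else 0)) Xs)" by auto
  from block_mid[OF fW, of X \<tau>] Cons.prems(1) obtain q1 where q1: "good W \<tau> X q1"
    "degree q1 \<le> card X + (if odd (card X) then 1 else 0)" by auto
  have sub: "X \<subseteq> W" "\<Union>(set Xs) \<subseteq> W" using Cons.prems(1) by (auto simp: contiguous_in_def)
  have "good W \<tau> (X \<union> \<Union>(set Xs)) (q1 * q)" by (rule good_mult[OF sub d(2) q1(1) q(1)])
  moreover have "degree (q1 * q) \<le> degree q1 + degree q" by (rule degree_mult_le)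
  ultimately show ?case using q(2) q1(2) by (intro exI[of _ "q1 * q"]) auto
qed

lemma card_blocks:
  "(\<forall>X\<in>set Xs. finite X) \<Longrightarrow> disj Xs \<Longrightarrow> card (\<Union>(set Xs)) = sum_list (map card Xs)"
proof (induction Xs)
  case Nil thus ?case by simp
next
  case (Cons X Xs)
  from disj_Cons[OF Cons.prems(2)] have d: "disj Xs" "X \<inter> \<Union>(set Xs) = {}" by auto
  have "card (X \<union> \<Union>(set Xs)) = card X + card (\<Union>(set Xs))"
    using Cons.prems(1) d by (intro card_Un_disjoint) auto
  thus ?case using Cons d by simp
qed

lemma odd_count:
  "sum_list (map (\<lambda>X. if odd (card X) then 1 else 0) Xs) = card {i. i < length Xs \<and> odd (card (Xs ! i))}"
proof -
  have "sum_list (map (\<lambda>X. if odd (card X) then 1 else 0) Xs)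
      = (\<Sum>i = 0..<length Xs. if odd (card (Xs ! i)) then 1 else (0::nat))"
    by (simp add: sum_list_sum_nth)
  also have "\<dots> = card {i \<in> {0..<length Xs}. odd (card (Xs ! i))}"
    by (simp add: sum.If_cases Int_def)
  also have "{i \<in> {0..<length Xs}. odd (card (Xs ! i))} = {i. i < length Xs \<and> odd (card (Xs ! i))}"
    by auto
  finally show ?thesis .
qed

lemma poly_moment:
  assumes "finite W" "\<forall>j\<le>d. (\<Sum>w\<in>W. g w * w ^ j) = (0::real)" "degree p \<le> d"
  shows "(\<Sum>w\<in>W. g w * poly p w) = 0"
proof -
  have "(\<Sum>w\<in>W. g w * poly p w) = (\<Sum>w\<in>W. \<Sum>i\<le>degree p. coeff p i * (g w * w ^ i))"
    by (simp add: poly_altdef sum_distrib_left algebra_simps)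
  also have "\<dots> = (\<Sum>i\<le>degree p. coeff p i * (\<Sum>w\<in>W. g w * w ^ i))"
    by (subst sum.swap) (simp add: sum_distrib_left)
  also have "\<dots> = 0" using assms by simp
  finally show ?thesis .
qed

lemma core:
  fixes W T YS YE :: "real set" and Xs :: "real set list" and g :: "real \<Rightarrow> real" and d :: nat
  assumes fW: "finite W"
    and T: "T = \<Union>(set (YS # Xs @ [YE]))"
    and dj: "disj (YS # Xs @ [YE])"
    and ct: "\<forall>S\<in>set (YS # Xs @ [YE]). contiguous_in W S"
    and ys: "YS = {} \<or> Min W \<in> YS" and ye: "YE = {} \<or> Max W \<in> YE"
    and cnt: "card T + card {i. i < length Xs \<and> odd (card (Xs ! i))} \<le> d"
    and mom: "\<forall>j\<le>d. (\<Sum>w\<in>W. g w * w ^ j) = 0"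
    and neg: "\<forall>w\<in>W. w \<notin> T \<longrightarrow> g w \<le> 0"
  shows "\<forall>w\<in>W. g w = 0"
proof -
  define \<tau> where "\<tau> = (\<lambda>w. g w < 0)"
  from disj_Cons[OF dj] have d1: "disj (Xs @ [YE])" "YS \<inter> \<Union>(set (Xs @ [YE])) = {}" by auto
  have d2: "disj Xs" unfolding disj_def
  proof (intro allI impI)
    fix a b assume "a < length Xs" "b < length Xs" "a \<noteq> b"
    thus "Xs ! a \<inter> Xs ! b = {}" using d1(1)[unfolded disj_def, rule_format, of a b] by (simp add: nth_append)
  qed
  have d3: "YE \<inter> \<Union>(set Xs) = {}"
  proof (rule ccontr)
    assume "YE \<inter> \<Union>(set Xs) \<noteq> {}"
    then obtain i where i: "i < length Xs" "YE \<inter> Xs ! i \<noteq> {}" by (metis Int_Union in_set_conv_nth SUP_bot_conv(2))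
    thus False using d1(1)[unfolded disj_def, rule_format, of "length Xs" i] by (auto simp: nth_append)
  qed
  have subs: "\<forall>S\<in>set (YS # Xs @ [YE]). S \<subseteq> W" using ct by (auto simp: contiguous_in_def)
  have fins: "\<forall>X\<in>set Xs. finite X" "finite YS" "finite YE"
    using subs fW by (auto intro: rev_finite_subset)
  obtain q0 where q0: "good W \<tau> (\<Union>(set Xs)) q0"
    "degree q0 \<le> sum_list (map (\<lambda>X. card X + (if odd (card X) then 1 else 0)) Xs)"
    using blocks_good[OF fW, of Xs \<tau>] ct d2 by auto
  obtain q1 where q1: "good W \<tau> YS q1" "degree q1 \<le> card YS"
    using block_start[OF fW _ ys, of \<tau>] ct by auto
  obtain q2 where q2: "good W \<tau> YE q2" "degree q2 \<le> card YE"
    using block_end[OF fW _ ye, of \<tau>] ct by auto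
  have g1: "good W \<tau> (YS \<union> \<Union>(set Xs)) (q1 * q0)"
    by (rule good_mult) (use subs d1(2) q1 q0 in auto)
  have g2: "good W \<tau> ((YS \<union> \<Union>(set Xs)) \<union> YE) ((q1 * q0) * q2)"
    by (rule good_mult) (use subs d1(2) d3 g1 q2 in auto)
  have TT: "T = (YS \<union> \<Union>(set Xs)) \<union> YE" using T by auto
  have cT: "card T = card YS + card (\<Union>(set Xs)) + card YE"
  proof -
    have "card T = card (YS \<union> \<Union>(set Xs)) + card YE"
      unfolding TT by (rule card_Un_disjoint) (use fins d1(2) d3 in auto)
    also have "card (YS \<union> \<Union>(set Xs)) = card YS + card (\<Union>(set Xs))"
      by (rule card_Un_disjoint) (use fins d1(2) in auto)
    finally show ?thesis .
  qed
  have cX: "card (\<Union>(set Xs)) = sum_list (map card Xs)" using card_blocks[OF fins(1) d2] .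
  define Q where "Q = (q1 * q0) * q2"
  have gQ: "good W \<tau> T Q" using g2 TT by (simp add: Q_def)
  have "degree Q \<le> degree q1 + degree q0 + degree q2"
  proof -
    have "degree Q \<le> degree (q1 * q0) + degree q2" unfolding Q_def by (rule degree_mult_le)
    moreover have "degree (q1 * q0) \<le> degree q1 + degree q0" by (rule degree_mult_le)
    ultimately show ?thesis by linarith
  qed
  also have "\<dots> \<le> card YS + (sum_list (map card Xs) + card {i. i < length Xs \<and> odd (card (Xs ! i))}) + card YE"
    using q0(2) q1(2) q2(2) by (simp add: sum_list_addf odd_count)
  also have "\<dots> \<le> d" using cnt cT cX by simp
  finally have dQ: "degree (- Q) \<le> d" by simp
  have zero: "(\<Sum>w\<in>W. g w * poly (- Q) w) = 0" by (rule poly_moment[OF fW mom dQ])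
  have nn: "\<forall>w\<in>W. 0 \<le> g w * poly (- Q) w \<and> (g w \<noteq> 0 \<longrightarrow> 0 < g w * poly (- Q) w)"
  proof
    fix w assume w: "w \<in> W"
    show "0 \<le> g w * poly (- Q) w \<and> (g w \<noteq> 0 \<longrightarrow> 0 < g w * poly (- Q) w)"
    proof (cases "w \<in> T")
      case True
      hence "sg (\<tau> w) (poly Q w)" using gQ by (simp add: good_def)
      thus ?thesis by (cases "g w < 0"; cases "g w = 0")
         (auto simp: sg_def \<tau>_def mult_less_0_iff mult_le_0_iff zero_less_mult_iff zero_le_mult_iff)
    next
      case False
      hence "0 < poly Q w" "g w \<le> 0" using gQ neg w by (auto simp: good_def)
      thus ?thesis by (cases "g w = 0") (auto simp: mult_less_0_iff mult_le_0_iff zero_less_mult_iff zero_le_mult_iff)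
    qed
  qed
  have "\<forall>w\<in>W. g w * poly (- Q) w = 0"
    using sum_nonneg_eq_0_iff[OF fW, of "\<lambda>w. g w * poly (- Q) w"] zero nn by auto
  thus ?thesis using nn by fastforce
qed

lemma coord_pos_mono: "(i::'n::{finite,wellorder}) < i' \<Longrightarrow> coord_pos i < coord_pos i'"
  unfolding coord_pos_def by (rule psubset_card_mono) auto

lemma coord_pos_surj:
  assumes "j < CARD('n::{finite,wellorder})"
  shows "\<exists>i::'n. coord_pos i = j"
proof -
  have inj: "inj (coord_pos :: 'n \<Rightarrow> nat)"
    by (metis coord_pos_mono injI less_irrefl linorder_neqE)
  have sub: "range (coord_pos :: 'n \<Rightarrow> nat) \<subseteq> {..<CARD('n)}"
  proof
    fix x assume "x \<in> range (coord_pos :: 'n \<Rightarrow> nat)"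
    then obtain i :: 'n where "x = coord_pos i" by auto
    moreover have "{j. j < i} \<subset> (UNIV :: 'n set)" by auto
    ultimately show "x \<in> {..<CARD('n)}" unfolding coord_pos_def
      by (simp add: psubset_card_mono)
  qed
  have "card (range (coord_pos :: 'n \<Rightarrow> nat)) = CARD('n)" using inj by (simp add: card_image)
  hence "range (coord_pos :: 'n \<Rightarrow> nat) = {..<CARD('n)}"
    using sub by (intro card_subset_eq) auto
  thus ?thesis using assms by (metis lessThan_iff rangeE)
qed

lemma moment_inj: "inj (moment_curve :: real \<Rightarrow> (real, 'n::{finite,wellorder}) vec)"
proof -
  obtain i :: 'n where i: "coord_pos i = 0" using coord_pos_surj[of 0] by auto
  show ?thesis
  proof (rule injI)
    fix s t assume "(moment_curve s :: (real, 'n) vec) = moment_curve t"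
    hence "(moment_curve s :: (real, 'n) vec) $ i = moment_curve t $ i" by simp
    thus "s = t" by (simp add: moment_curve_def i)
  qed
qed

lemma hull_coeffs:
  fixes x :: "(real, 'n::{finite,wellorder}) vec"
  assumes "finite T" "x \<in> convex hull ((moment_curve :: real \<Rightarrow> (real, 'n::{finite,wellorder}) vec) ` T)"
  shows "\<exists>a. (\<forall>t\<in>T. 0 \<le> a t) \<and> sum a T = 1 \<and> (\<Sum>t\<in>T. a t *\<^sub>R (moment_curve t :: (real, 'n::{finite,wellorder}) vec)) = x"
proof -
  have inj: "inj_on (moment_curve :: real \<Rightarrow> (real, 'n) vec) T" using moment_inj by (metis inj_on_subset subset_UNIV)
  from assms obtain u where u: "\<forall>y\<in>(moment_curve :: real \<Rightarrow> (real, 'n) vec) ` T. 0 \<le> u y"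
    "sum u ((moment_curve :: real \<Rightarrow> (real, 'n) vec) ` T) = 1"
    "(\<Sum>y\<in>(moment_curve :: real \<Rightarrow> (real, 'n) vec) ` T. u y *\<^sub>R y) = x"
    by (auto simp: convex_hull_finite)
  show ?thesis
    apply (rule exI[of _ "\<lambda>t. u (moment_curve t :: (real, 'n) vec)"])
    using u by (simp add: sum.reindex[OF inj])
qed

lemma sum_if_restrict:
  fixes v :: "real \<Rightarrow> 'a::real_vector"
  assumes "finite W" "T \<subseteq> W"
  shows "(\<Sum>t\<in>W. (if t \<in> T then h t else 0) *\<^sub>R v t) = (\<Sum>t\<in>T. h t *\<^sub>R v t)"
proof -
  have "(\<Sum>t\<in>W. (if t \<in> T then h t else 0) *\<^sub>R v t) = (\<Sum>t\<in>T. (if t \<in> T then h t else 0) *\<^sub>R v t)"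
    by (rule sum.mono_neutral_right) (use assms in auto)
  thus ?thesis by simp
qed

theorem mainTheorem6:
  fixes T1 T2 :: "real set" and k :: nat
  assumes "1 \<le> k" and "k \<le> CARD('n::{finite,wellorder})"
    and "finite T1" and "card T1 = k" and "finite T2" and "card T2 = k"
    and "\<exists>T \<in> {T1, T2}. \<exists>YS (Xs :: real set list) YE.
           (let W = T1 \<union> T2; P = YS # Xs @ [YE] in
              T = \<Union> (set P)
            \<and> (\<forall>a < length P. \<forall>b < length P. a \<noteq> b \<longrightarrow> P ! a \<inter> P ! b = {})
            \<and> (\<forall>S \<in> set P. contiguous_in W S)
            \<and> (YS = {} \<or> Min W \<in> YS)
            \<and> (YE = {} \<or> Max W \<in> YE)
            \<and> card {i. i < length Xs \<and> odd (card (Xs ! i))} \<le> CARD('n::{finite,wellorder}) - k)"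
  shows "convex hull ((moment_curve :: real \<Rightarrow> real ^ 'n::{finite,wellorder}) ` T1)
           \<inter> convex hull ((moment_curve :: real \<Rightarrow> real ^ 'n::{finite,wellorder}) ` T2)
         = convex hull ((moment_curve :: real \<Rightarrow> real ^ 'n::{finite,wellorder}) ` T1
                         \<inter> (moment_curve :: real \<Rightarrow> real ^ 'n::{finite,wellorder}) ` T2)"
proof
  show "convex hull ((moment_curve :: real \<Rightarrow> (real, 'n::{finite,wellorder}) vec) ` T1 \<inter> moment_curve ` T2)
    \<subseteq> convex hull ((moment_curve :: real \<Rightarrow> (real, 'n::{finite,wellorder}) vec) ` T1) \<inter> convex hull (moment_curve ` T2)"
    by (simp add: hull_mono)
next
  let ?g = "moment_curve :: real \<Rightarrow> (real, 'n) vec"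
  define W where "W = T1 \<union> T2"
  have fW: "finite W" using assms(3,5) by (simp add: W_def)
  show "convex hull (?g ` T1) \<inter> convex hull (?g ` T2) \<subseteq> convex hull (?g ` T1 \<inter> ?g ` T2)"
  proof
    fix x assume x: "x \<in> convex hull (?g ` T1) \<inter> convex hull (?g ` T2)"
    obtain a where a: "\<forall>t\<in>T1. 0 \<le> a t" "sum a T1 = 1" "(\<Sum>t\<in>T1. a t *\<^sub>R ?g t) = x"
      using hull_coeffs[OF assms(3)] x by blast
    obtain b where b: "\<forall>t\<in>T2. 0 \<le> b t" "sum b T2 = 1" "(\<Sum>t\<in>T2. b t *\<^sub>R ?g t) = x"
      using hull_coeffs[OF assms(5)] x by blast
    define f where "f t = (if t \<in> T1 then a t else 0) - (if t \<in> T2 then b t else 0)" for t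
    have vec: "(\<Sum>t\<in>W. f t *\<^sub>R ?g t) = 0"
    proof -
      have "(\<Sum>t\<in>W. f t *\<^sub>R ?g t) = (\<Sum>t\<in>W. (if t \<in> T1 then a t else 0) *\<^sub>R ?g t)
           - (\<Sum>t\<in>W. (if t \<in> T2 then b t else 0) *\<^sub>R ?g t)"
        by (simp add: f_def scaleR_left_diff_distrib sum_subtractf)
      also have "\<dots> = x - x"
        using sum_if_restrict[OF fW, of T1 a ?g] sum_if_restrict[OF fW, of T2 b ?g] a b
        by (simp add: W_def)
      finally show ?thesis by simp
    qed
    have sc: "(\<Sum>t\<in>W. f t) = 0"
    proof -
      have "(\<Sum>t\<in>W. f t) = (\<Sum>t\<in>W. (if t \<in> T1 then a t else 0) *\<^sub>R (1::real))
           - (\<Sum>t\<in>W. (if t \<in> T2 then b t else 0) *\<^sub>R (1::real))"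
        by (simp add: f_def sum_subtractf)
      also have "\<dots> = 1 - 1"
        using sum_if_restrict[OF fW, of T1 a "\<lambda>_. 1::real"] sum_if_restrict[OF fW, of T2 b "\<lambda>_. 1::real"] a b
        by (simp add: W_def)
      finally show ?thesis by simp
    qed
    have mom: "\<forall>j\<le>CARD('n). (\<Sum>w\<in>W. f w * w ^ j) = 0"
    proof (intro allI impI)
      fix j assume j: "j \<le> CARD('n)"
      show "(\<Sum>w\<in>W. f w * w ^ j) = 0"
      proof (cases j)
        case 0 thus ?thesis using sc by simp
      next
        case (Suc j')
        have "\<exists>i::'n. coord_pos i = j'" using j Suc by (intro coord_pos_surj) simp
        then obtain i :: 'n where i: "coord_pos i = j'" by blast
        have "(\<Sum>t\<in>W. f t *\<^sub>R ?g t) $ i = 0" using vec by simp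
        thus ?thesis by (simp add: moment_curve_def i Suc)
      qed
    qed
    from assms(7) obtain T YS Xs YE where TT: "T \<in> {T1, T2}"
      and h: "T = \<Union>(set (YS # Xs @ [YE]))" "disj (YS # Xs @ [YE])"
        "\<forall>S\<in>set (YS # Xs @ [YE]). contiguous_in W S"
        "YS = {} \<or> Min W \<in> YS" "YE = {} \<or> Max W \<in> YE"
        "card {i. i < length Xs \<and> odd (card (Xs ! i))} \<le> CARD('n) - k"
      unfolding Let_def disj_def W_def by blast
    have cnt: "card T + card {i. i < length Xs \<and> odd (card (Xs ! i))} \<le> CARD('n)"
      using h(6) assms(2,4,6) TT by auto
    have f0: "\<forall>w\<in>W. f w = 0"
    proof (cases "T = T1")
      case True
      show ?thesis
        by (rule core[OF fW h(1-5) cnt mom]) (use True a b in \<open>auto simp: W_def f_def\<close>)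
    next
      case False
      hence T2: "T = T2" using TT by auto
      have mom': "\<forall>j\<le>CARD('n). (\<Sum>w\<in>W. (- f w) * w ^ j) = 0"
        using mom by (simp add: sum_negf)
      have "\<forall>w\<in>W. - f w = 0"
        by (rule core[OF fW h(1-5) cnt mom']) (use T2 a b in \<open>auto simp: W_def f_def\<close>)
      thus ?thesis by simp
    qed
    have a0: "\<forall>t\<in>T1 - (T1 \<inter> T2). a t = 0"
    proof
      fix t assume t: "t \<in> T1 - (T1 \<inter> T2)"
      hence "f t = 0" using f0 by (simp add: W_def)
      thus "a t = 0" using t by (simp add: f_def)
    qed
    have s1: "sum a (T1 \<inter> T2) = 1"
      using a(2) sum.mono_neutral_right[OF assms(3), of "T1 \<inter> T2" a] a0 by auto
    have s2: "(\<Sum>t\<in>T1 \<inter> T2. a t *\<^sub>R ?g t) = x"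
      using a(3) sum.mono_neutral_right[OF assms(3), of "T1 \<inter> T2" "\<lambda>t. a t *\<^sub>R ?g t"] a0 by auto
    have "(\<Sum>t\<in>T1 \<inter> T2. a t *\<^sub>R ?g t) \<in> convex hull (?g ` T1 \<inter> ?g ` T2)"
      by (rule convex_sum) (use assms(3) s1 a(1) in \<open>auto intro: hull_inc\<close>)
    thus "x \<in> convex hull (?g ` T1 \<inter> ?g ` T2)" using s2 by simp
  qed
qed

end
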